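(* Let $E$ be a graph and $K$ a field. Then $\mathbf{K}_{L_K(E)}$ is not Lie solvable if one of the following holds: (1) $E$ contains a cycle with an exit; (2) $E$ contains one of the following subgraphs: $F_1$: three distinct vertices $x,y,v$ with edges $e:x\to y$ and $f:y\to v$; $F_2$: three distinct vertices $x,v,z$ with edges $e:x\to v$ and $f:z\to v$; $F_3$: two distinct vertices $x,v$ with two distinct edges $e,f$ both from $x$ to $v$.
   Context: A graph $E=(E^0,E^1,r,s)$ has vertex set $E^0$, edge set $E^1$, range and source maps $r,s:E^1\to E^0$. A vertex is regular if it emits a finite nonzero number of edges; $\mathrm{Reg}(E)$ is the set of regular vertices. A path is $e_1\cdots e_n$ with $r(e_i)=s(e_{i+1})$; a cycle is a closed path $s(e_1)=r(e_n)$ whose vertices $s(e_i)$ are distinct; an exit of a path $e_1\cdots e_n$ is an edge $e$ with $s(e)=s(e_i)$ for some $i$ and $e\ne e_i$. The Leavitt path algebra $L_K(E)$ is the free $K$-algebra generated by $E^0\cup E^1\cup\{e^*:e\in E^1\}$ subject to: $vv'=\delta_{v,v'}v$; $s(e)e=er(e)=e$; $r(e)e^*=e^*s(e)=e^*$; $e^*f=\delta_{e,f}r(e)$; $v=\sum_{s(e)=v}ee^*$ for $v\in\mathrm{Reg}(E)$. The standard involution ${}^\star$ on $L_K(E)$ is the $K$-linear involution with $v^\star=v$, $e^\star=e^*$, $(e^* )^\star=e$. $\mathbf{K}_{L_K(E)}=\{x\in L_K(E):x^\star=-x\}$, a Lie subalgebra under $[a,b]=ab-ba$. Lie solvable means $\mathcal{L}^{(n)}=0$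 for some $n$, where $\mathcal{L}^{(0)}=\mathcal{L}$, $\mathcal{L}^{(n)}=[\mathcal{L}^{(n-1)},\mathcal{L}^{(n-1)}]$. *)

theory Defs
  imports Main
begin

text \<open>Generators of the free algebra: vertices, real edges, ghost edges.\<close>
datatype ('v, 'e) gen = V 'v | Ed 'e | Gh 'e

text \<open>The free (non-unital) K-algebra on the generators, represented by coefficient
  functions on words: finitely supported, with zero coefficient on the empty word.\<close>
definition free_alg :: "('g list \<Rightarrow> 'k::field) set" where
  "free_alg = {f. finite {w. f w \<noteq> 0} \<and> f [] = 0}"

definition mono :: "'g list \<Rightarrow> 'g list \<Rightarrow> 'k::field" where
  "mono w = (\<lambda>u. if u = w then 1 else 0)"

definition fmult :: "('g list \<Rightarrow> 'k::field) \<Rightarrow> ('g list \<Rightarrow> 'k) \<Rightarrow> 'g list \<Rightarrow> 'k" where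
  "fmult f g = (\<lambda>w. \<Sum>i\<le>length w. f (take i w) * g (drop i w))"

definition fadd :: "('g list \<Rightarrow> 'k::field) \<Rightarrow> ('g list \<Rightarrow> 'k) \<Rightarrow> 'g list \<Rightarrow> 'k" where
  "fadd f g = (\<lambda>w. f w + g w)"

definition fsmult :: "'k::field \<Rightarrow> ('g list \<Rightarrow> 'k) \<Rightarrow> 'g list \<Rightarrow> 'k" where
  "fsmult c f = (\<lambda>w. c * f w)"

definition fminus :: "('g list \<Rightarrow> 'k::field) \<Rightarrow> ('g list \<Rightarrow> 'k) \<Rightarrow> 'g list \<Rightarrow> 'k" where
  "fminus f g = (\<lambda>w. f w - g w)"

definition fbracket :: "('g list \<Rightarrow> 'k::field) \<Rightarrow> ('g list \<Rightarrow> 'k) \<Rightarrow> 'g list \<Rightarrow> 'k" where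
  "fbracket a b = fminus (fmult a b) (fmult b a)"

fun adj :: "('v, 'e) gen \<Rightarrow> ('v, 'e) gen" where
  "adj (V v) = V v" | "adj (Ed e) = Gh e" | "adj (Gh e) = Ed e"

definition fstar :: "(('v, 'e) gen list \<Rightarrow> 'k::field) \<Rightarrow> ('v, 'e) gen list \<Rightarrow> 'k" where
  "fstar f = (\<lambda>w. f (map adj (rev w)))"

inductive_set lspan :: "('g list \<Rightarrow> 'k::field) set \<Rightarrow> ('g list \<Rightarrow> 'k) set"
  for S where
  lspan_zero: "(\<lambda>_. 0) \<in> lspan S"
| lspan_base: "x \<in> S \<Longrightarrow> x \<in> lspan S"
| lspan_add: "x \<in> lspan S \<Longrightarrow> y \<in> lspan S \<Longrightarrow> fadd x y \<in> lspan S"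
| lspan_smult: "x \<in> lspan S \<Longrightarrow> fsmult c x \<in> lspan S"

definition ideal_gen :: "('g list \<Rightarrow> 'k::field) set \<Rightarrow> ('g list \<Rightarrow> 'k) set" where
  "ideal_gen R = lspan ({x. x \<in> R}
     \<union> {fmult (mono u) x | u x. u \<noteq> [] \<and> x \<in> R}
     \<union> {fmult x (mono w) | x w. w \<noteq> [] \<and> x \<in> R}
     \<union> {fmult (fmult (mono u) x) (mono w) | u x w. u \<noteq> [] \<and> w \<noteq> [] \<and> x \<in> R})"

definition regular :: "('e \<Rightarrow> 'v) \<Rightarrow> 'v \<Rightarrow> bool" where
  "regular s v \<longleftrightarrow> finite {e. s e = v} \<and> {e. s e = v} \<noteq> {}"

definition lpa_rels :: "('e \<Rightarrow> 'v) \<Rightarrow> ('e \<Rightarrow> 'v) \<Rightarrow> (('v, 'e) gen list \<Rightarrow> 'k::field) set" where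
  "lpa_rels s r =
     {fminus (mono [V v, V v']) (if v = v' then mono [V v] else (\<lambda>_. 0)) | v v'. True}
   \<union> {fminus (mono [V (s e), Ed e]) (mono [Ed e]) | e. True}
   \<union> {fminus (mono [Ed e, V (r e)]) (mono [Ed e]) | e. True}
   \<union> {fminus (mono [V (r e), Gh e]) (mono [Gh e]) | e. True}
   \<union> {fminus (mono [Gh e, V (s e)]) (mono [Gh e]) | e. True}
   \<union> {fminus (mono [Gh e, Ed f]) (if e = f then mono [V (r e)] else (\<lambda>_. 0)) | e f. True}
   \<union> {fminus (mono [V v]) (\<lambda>w. \<Sum>e\<in>{e. s e = v}. mono [Ed e, Gh e] w) | v. regular s v}"

definition lpa_ideal :: "('e \<Rightarrow> 'v) \<Rightarrow> ('e \<Rightarrow> 'v) \<Rightarrow> (('v, 'e) gen list \<Rightarrow> 'k::field) set" where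
  "lpa_ideal s r = ideal_gen (lpa_rels s r)"

text \<open>Preimages in the free algebra of the derived series of the Lie algebra of skew
  elements of L_K(E) = free_alg / lpa_ideal.\<close>
fun lpa_derived :: "('e \<Rightarrow> 'v) \<Rightarrow> ('e \<Rightarrow> 'v) \<Rightarrow> nat \<Rightarrow> (('v, 'e) gen list \<Rightarrow> 'k::field) set" where
  "lpa_derived s r 0 = {x \<in> free_alg. fadd (fstar x) x \<in> lpa_ideal s r}"
| "lpa_derived s r (Suc n) =
     lspan ({fbracket a b | a b. a \<in> lpa_derived s r n \<and> b \<in> lpa_derived s r n} \<union> lpa_ideal s r)"

definition skew_lie_solvable :: "('e \<Rightarrow> 'v) \<Rightarrow> ('e \<Rightarrow> 'v) \<Rightarrow> 'k::field itself \<Rightarrow> bool" where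
  "skew_lie_solvable s r (_ :: 'k itself) \<longleftrightarrow>
     (\<exists>n. (lpa_derived s r n :: (('v, 'e) gen list \<Rightarrow> 'k) set) \<subseteq> lpa_ideal s r)"

definition is_path :: "('e \<Rightarrow> 'v) \<Rightarrow> ('e \<Rightarrow> 'v) \<Rightarrow> 'e list \<Rightarrow> bool" where
  "is_path s r p \<longleftrightarrow> p \<noteq> [] \<and> (\<forall>i. Suc i < length p \<longrightarrow> r (p ! i) = s (p ! Suc i))"

definition is_cycle :: "('e \<Rightarrow> 'v) \<Rightarrow> ('e \<Rightarrow> 'v) \<Rightarrow> 'e list \<Rightarrow> bool" where
  "is_cycle s r p \<longleftrightarrow> is_path s r p \<and> s (hd p) = r (last p) \<and> distinct (map s p)"

definition is_exit :: "('e \<Rightarrow> 'v) \<Rightarrow> 'e list \<Rightarrow> 'e \<Rightarrow> bool" where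
  "is_exit s p e \<longleftrightarrow> (\<exists>i < length p. s e = s (p ! i) \<and> e \<noteq> p ! i)"

definition has_cycle_with_exit :: "('e \<Rightarrow> 'v) \<Rightarrow> ('e \<Rightarrow> 'v) \<Rightarrow> bool" where
  "has_cycle_with_exit s r \<longleftrightarrow> (\<exists>p e. is_cycle s r p \<and> is_exit s p e)"

definition contains_F1 :: "('e \<Rightarrow> 'v) \<Rightarrow> ('e \<Rightarrow> 'v) \<Rightarrow> bool" where
  "contains_F1 s r \<longleftrightarrow> (\<exists>x y v e f. distinct [x, y, v] \<and>
      s e = x \<and> r e = y \<and> s f = y \<and> r f = v)"

definition contains_F2 :: "('e \<Rightarrow> 'v) \<Rightarrow> ('e \<Rightarrow> 'v) \<Rightarrow> bool" where
  "contains_F2 s r \<longleftrightarrow> (\<exists>x v z e f. distinct [x, v, z] \<and>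
      s e = x \<and> r e = v \<and> s f = z \<and> r f = v)"

definition contains_F3 :: "('e \<Rightarrow> 'v) \<Rightarrow> ('e \<Rightarrow> 'v) \<Rightarrow> bool" where
  "contains_F3 s r \<longleftrightarrow> (\<exists>x v e f. x \<noteq> v \<and> e \<noteq> f \<and>
      s e = x \<and> r e = v \<and> s f = x \<and> r f = v)"

end

theory Submission
  imports Defs
begin


type_synonym ('g,'k) fa = "'g list \<Rightarrow> 'k"

lemma fmult_mono_left:
  "fmult (mono u) x = (\<lambda>m. if take (length u) m = u then x (drop (length u) m) else (0::'k::field))"
proof
  fix m :: "'a list"
  have "fmult (mono u) x m = (\<Sum>i\<le>length m. (if i = length u then (if take i m = u then x (drop i m) else 0) else 0))"
    unfolding fmult_def mono_def
  proof (rule sum.cong)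
    fix i assume "i \<in> {..length m}"
    then show "(if take i m = u then 1 else 0) * x (drop i m) =
         (if i = length u then if take i m = u then x (drop i m) else 0 else 0)"
      by auto
  qed simp
  also have "\<dots> = (if take (length u) m = u then x (drop (length u) m) else 0)"
    by (subst sum.delta) auto
  finally show "fmult (mono u) x m = (if take (length u) m = u then x (drop (length u) m) else 0)" .
qed



lemma fmult_mono_right:
  "fmult x (mono w) = (\<lambda>m. if length w \<le> length m \<and> drop (length m - length w) m = w
      then x (take (length m - length w) m) else (0::'k::field))"
proof
  fix m :: "'a list"
  have "fmult x (mono w) m = (\<Sum>i\<le>length m. (if i = length m - length w then
       (if length w \<le> length m \<and> drop i m = w then x (take i m) else 0) else 0))"
    unfolding fmult_def mono_def
  proof (rule sum.cong)
    fix i assume "i \<in> {..length m}"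
    then show "x (take i m) * (if drop i m = w then 1 else 0) =
         (if i = length m - length w then (if length w \<le> length m \<and> drop i m = w then x (take i m) else 0) else 0)"
      by auto
  qed simp
  also have "\<dots> = (if length w \<le> length m \<and> drop (length m - length w) m = w
      then x (take (length m - length w) m) else 0)"
    by (subst sum.delta) auto
  finally show "fmult x (mono w) m = (if length w \<le> length m \<and> drop (length m - length w) m = w
      then x (take (length m - length w) m) else 0)" .
qed

lemma mono_app: "fmult (mono u) (mono w) = (mono (u @ w) :: 'g list \<Rightarrow> 'k::field)"
  unfolding fmult_mono_left by (auto simp: mono_def fun_eq_iff) (metis append_take_drop_id)

lemma assoc1: "fmult (mono u) (fmult (mono u') x) = fmult (mono (u@u')) (x :: 'g list \<Rightarrow> 'k::field)"
  unfolding fmult_mono_left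
  by (auto simp: fun_eq_iff take_add add.commute append_eq_conv_conj)

lemma L1[simp]: "fmult (mono u) x (u @ m) = (x m :: 'k::field)"
  by (simp add: fmult_mono_left)
lemma L0: "\<not> (\<exists>m'. m = u @ m') \<Longrightarrow> fmult (mono u) x m = (0 :: 'k::field)"
  by (simp add: fmult_mono_left) (metis append_take_drop_id)
lemma R1[simp]: "fmult x (mono w) (m @ w) = (x m :: 'k::field)"
  by (simp add: fmult_mono_right)
lemma R0: "\<not> (\<exists>m'. m = m' @ w) \<Longrightarrow> fmult x (mono w) m = (0 :: 'k::field)"
  by (simp add: fmult_mono_right) (metis append_take_drop_id)

lemma assoc2: "fmult (fmult x (mono w)) (mono w') = fmult x (mono (w@w') :: _ \<Rightarrow> 'k::field)"
proof
  fix m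
  show "fmult (fmult x (mono w)) (mono w') m = fmult x (mono (w@w')) m"
  proof (cases "\<exists>m'. m = m' @ w @ w'")
    case True
    then obtain m' where "m = m' @ w @ w'" by blast
    then show ?thesis using R1[of x w m'] R1[of "fmult x (mono w)" w' "m' @ w"] R1[of x "w@w'" m']
      by simp
  next
    case False
    then have "fmult x (mono (w@w')) m = 0" by (intro R0) auto
    moreover have "fmult (fmult x (mono w)) (mono w') m = 0"
    proof (cases "\<exists>m''. m = m'' @ w'")
      case True
      then obtain m'' where m'': "m = m'' @ w'" by blast
      with False have "\<not> (\<exists>m'. m'' = m' @ w)" by auto
      then show ?thesis using m'' R0[of m'' w x] by simp
    qed (rule R0)
    ultimately show ?thesis by simp
  qed
qed

lemma assoc3: "fmult (mono u) (fmult x (mono w)) = fmult (fmult (mono u) x) (mono w :: _ \<Rightarrow> 'k::field)"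
proof
  fix m
  show "fmult (mono u) (fmult x (mono w)) m = fmult (fmult (mono u) x) (mono w) m"
  proof (cases "\<exists>m'. m = u @ m' @ w")
    case True
    then obtain m' where "m = u @ m' @ w" by blast
    then show ?thesis using R1[of "fmult (mono u) x" w "u @ m'"] by simp
  next
    case False
    have a: "fmult (mono u) (fmult x (mono w)) m = 0"
    proof (cases "\<exists>m''. m = u @ m''")
      case True
      then obtain m'' where m'': "m = u @ m''" by blast
      with False have "\<not> (\<exists>m'. m'' = m' @ w)" by auto
      then show ?thesis using m'' R0[of m'' w x] by simp
    qed (rule L0)
    have b: "fmult (fmult (mono u) x) (mono w) m = 0"
    proof (cases "\<exists>m''. m = m'' @ w")
      case True
      then obtain m'' where m'': "m = m'' @ w" by blast
      with False have "\<not> (\<exists>m'. m'' = u @ m')" by auto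
      then show ?thesis using m'' L0[of m'' u x] by simp
    qed (rule R0)
    show ?thesis using a b by simp
  qed
qed



abbreviation Z :: "'g list \<Rightarrow> 'k::field" where "Z \<equiv> (\<lambda>_. 0)"

lemma fmult_zero[simp]: "fmult Z x = Z" "fmult x Z = Z"
  by (auto simp: fmult_def fun_eq_iff)

lemma fmult_add_left: "fmult (\<lambda>w. a w + b w) c = (\<lambda>w. fmult a c w + fmult b c w)"
  by (auto simp: fmult_def fun_eq_iff distrib_right sum.distrib)
lemma fmult_add_right: "fmult c (\<lambda>w. a w + b w) = (\<lambda>w. fmult c a w + fmult c b w)"
  by (auto simp: fmult_def fun_eq_iff distrib_left sum.distrib)
lemma fmult_diff_left: "fmult (\<lambda>w. a w - b w) c = (\<lambda>w. fmult a c w - fmult b c w)"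
  by (auto simp: fmult_def fun_eq_iff left_diff_distrib sum_subtractf)
lemma fmult_diff_right: "fmult c (\<lambda>w. a w - b w) = (\<lambda>w. fmult c a w - fmult c b w)"
  by (auto simp: fmult_def fun_eq_iff right_diff_distrib sum_subtractf)
lemma fmult_smult_left: "fmult (\<lambda>w. k * a w) c = (\<lambda>w. k * fmult a c w)"
  by (auto simp: fmult_def fun_eq_iff sum_distrib_left mult.assoc)
lemma fmult_smult_right: "fmult c (\<lambda>w. k * a w) = (\<lambda>w. k * fmult c a w)"
  by (auto simp: fmult_def fun_eq_iff sum_distrib_left mult.assoc mult.left_commute)

lemma mono_nil_left[simp]: "fmult (mono []) x = (x :: _ \<Rightarrow> 'k::field)"
  by (simp add: fmult_mono_left)
lemma mono_nil_right[simp]: "fmult x (mono []) = (x :: _ \<Rightarrow> 'k::field)"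
  by (simp add: fmult_mono_right)

definition ctx :: "'g list \<Rightarrow> ('g list \<Rightarrow> 'k::field) \<Rightarrow> 'g list \<Rightarrow> 'g list \<Rightarrow> 'k" where
  "ctx u x w = fmult (mono u) (fmult x (mono w))"

lemma ctx_ctx: "ctx u (ctx u' x w') w = ctx (u @ u') x (w' @ w)"
  unfolding ctx_def
  by (metis assoc1 assoc2 assoc3)

lemma ctx_mono: "ctx u (mono m) w = mono (u @ m @ w)"
  unfolding ctx_def by (simp add: mono_app)

lemma ctx_zero[simp]: "ctx u Z w = Z"
  by (simp add: ctx_def)

lemma ctx_diff: "ctx u (\<lambda>m. a m - b m) w = (\<lambda>m. ctx u a w m - ctx u b w m)"
  by (simp add: ctx_def fmult_diff_left fmult_diff_right)
lemma ctx_add: "ctx u (\<lambda>m. a m + b m) w = (\<lambda>m. ctx u a w m + ctx u b w m)"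
  by (simp add: ctx_def fmult_add_left fmult_add_right)
lemma ctx_smult: "ctx u (\<lambda>m. k * a m) w = (\<lambda>m. k * ctx u a w m)"
  by (simp add: ctx_def fmult_smult_left fmult_smult_right)

lemma lspan_diff: "x \<in> lspan S \<Longrightarrow> y \<in> lspan S \<Longrightarrow> (\<lambda>m. x m - y m) \<in> lspan S"
proof -
  assume "x \<in> lspan S" "y \<in> lspan S"
  then have "fadd x (fsmult (-1) y) \<in> lspan S" by (intro lspan_add lspan_smult)
  moreover have "fadd x (fsmult (-1) y) = (\<lambda>m. x m - y m)" by (simp add: fadd_def fsmult_def fun_eq_iff)
  ultimately show ?thesis by simp
qed

lemma lspan_add': "x \<in> lspan S \<Longrightarrow> y \<in> lspan S \<Longrightarrow> (\<lambda>m. x m + y m) \<in> lspan S"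
  using lspan_add[of x S y] by (simp add: fadd_def)

lemma lspan_smult': "x \<in> lspan S \<Longrightarrow> (\<lambda>m. k * x m) \<in> lspan S"
  using lspan_smult[of x S k] by (simp add: fsmult_def)

definition cg :: "('g list \<Rightarrow> 'k::field) set \<Rightarrow> ('g list \<Rightarrow> 'k) \<Rightarrow> ('g list \<Rightarrow> 'k) \<Rightarrow> bool" where
  "cg S x y \<longleftrightarrow> (\<lambda>m. x m - y m) \<in> lspan S"

lemma cg_refl: "cg S x x"
  by (simp add: cg_def lspan_zero)
lemma cg_sym: "cg S x y \<Longrightarrow> cg S y x"
proof -
  assume "cg S x y"
  then have "(\<lambda>m. (-1) * (x m - y m)) \<in> lspan S" unfolding cg_def by (rule lspan_smult')
  moreover have "(\<lambda>m. (-1) * (x m - y m)) = (\<lambda>m. y m - x m)" by (simp add: fun_eq_iff)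
  ultimately show ?thesis unfolding cg_def by simp
qed
lemma cg_trans: "cg S x y \<Longrightarrow> cg S y z \<Longrightarrow> cg S x z"
proof -
  assume "cg S x y" "cg S y z"
  then have "(\<lambda>m. (x m - y m) + (y m - z m)) \<in> lspan S" unfolding cg_def by (rule lspan_add')
  moreover have "(\<lambda>m. (x m - y m) + (y m - z m)) = (\<lambda>m. x m - z m)" by (simp add: fun_eq_iff)
  ultimately show ?thesis unfolding cg_def by simp
qed
lemma cg_add: "cg S a b \<Longrightarrow> cg S c d \<Longrightarrow> cg S (\<lambda>m. a m + c m) (\<lambda>m. b m + d m)"
proof -
  assume "cg S a b" "cg S c d"
  then have "(\<lambda>m. (a m - b m) + (c m - d m)) \<in> lspan S" unfolding cg_def by (rule lspan_add')
  moreover have "(\<lambda>m. (a m - b m) + (c m - d m)) = (\<lambda>m. (a m + c m) - (b m + d m))" by (simp add: fun_eq_iff)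
  ultimately show ?thesis unfolding cg_def by simp
qed
lemma cg_diff: "cg S a b \<Longrightarrow> cg S c d \<Longrightarrow> cg S (\<lambda>m. a m - c m) (\<lambda>m. b m - d m)"
proof -
  assume "cg S a b" "cg S c d"
  then have "(\<lambda>m. (a m - b m) - (c m - d m)) \<in> lspan S" unfolding cg_def by (rule lspan_diff)
  moreover have "(\<lambda>m. (a m - b m) - (c m - d m)) = (\<lambda>m. (a m - c m) - (b m - d m))" by (simp add: fun_eq_iff)
  ultimately show ?thesis unfolding cg_def by simp
qed

definition gens :: "('g list \<Rightarrow> 'k::field) set \<Rightarrow> ('g list \<Rightarrow> 'k) set" where
  "gens R = {x. x \<in> R}
     \<union> {fmult (mono u) x | u x. u \<noteq> [] \<and> x \<in> R}
     \<union> {fmult x (mono w) | x w. w \<noteq> [] \<and> x \<in> R}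
     \<union> {fmult (fmult (mono u) x) (mono w) | u x w. u \<noteq> [] \<and> w \<noteq> [] \<and> x \<in> R}"

lemma ideal_gen_eq: "ideal_gen R = lspan (gens R)"
  by (simp add: ideal_gen_def gens_def)

lemma gens_ctx: "x \<in> gens R \<Longrightarrow> \<exists>u y w. y \<in> R \<and> x = ctx u y w"
  unfolding gens_def
proof (elim UnE)
  assume "x \<in> {x. x \<in> R}"
  then show ?thesis by (intro exI[of _ "[]"] exI[of _ x]) (simp add: ctx_def)
next
  assume "x \<in> {fmult (mono u) x | u x. u \<noteq> [] \<and> x \<in> R}"
  then obtain u y where "x = fmult (mono u) y" "y \<in> R" by blast
  then show ?thesis by (intro exI[of _ u] exI[of _ y] exI[of _ "[]"]) (simp add: ctx_def)
next
  assume "x \<in> {fmult x (mono w) | x w. w \<noteq> [] \<and> x \<in> R}"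
  then obtain w y where "x = fmult y (mono w)" "y \<in> R" by blast
  then show ?thesis by (intro exI[of _ "[]"] exI[of _ y] exI[of _ w]) (simp add: ctx_def)
next
  assume "x \<in> {fmult (fmult (mono u) x) (mono w) | u x w. u \<noteq> [] \<and> w \<noteq> [] \<and> x \<in> R}"
  then obtain u y w where "x = fmult (fmult (mono u) y) (mono w)" "y \<in> R" by blast
  then show ?thesis by (intro exI[of _ u] exI[of _ y] exI[of _ w]) (simp add: ctx_def assoc3)
qed

lemma ctx_gens: "y \<in> R \<Longrightarrow> ctx u y w \<in> lspan (gens R)"
proof (rule lspan_base)
  assume y: "y \<in> R"
  show "ctx u y w \<in> gens R"
  proof (cases "u = []")
    case True
    then show ?thesis
    proof (cases "w = []")
      case True
      with \<open>u = []\<close> y show ?thesis by (simp add: ctx_def gens_def)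
    next
      case False
      with \<open>u = []\<close> y show ?thesis unfolding ctx_def gens_def by simp blast
    qed
  next
    case False
    then show ?thesis
    proof (cases "w = []")
      case True
      with \<open>u \<noteq> []\<close> y show ?thesis unfolding ctx_def gens_def by simp blast
    next
      case False
      with \<open>u \<noteq> []\<close> y show ?thesis unfolding ctx_def gens_def assoc3 by blast
    qed
  qed
qed

lemma ideal_ctx: "x \<in> lspan (gens R) \<Longrightarrow> ctx u x w \<in> lspan (gens R)"
proof (induction x rule: lspan.induct)
  case lspan_zero
  then show ?case by (simp add: lspan.lspan_zero)
next
  case (lspan_base x)
  then obtain u' y w' where "y \<in> R" "x = ctx u' y w'" using gens_ctx by blast
  then show ?case by (simp add: ctx_ctx ctx_gens)
next
  case (lspan_add x y)
  then show ?case using lspan_add'[of "ctx u x w" _ "ctx u y w"] ctx_add[of u x y w]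
    by (simp add: fadd_def)
next
  case (lspan_smult x c)
  then show ?case using lspan_smult'[of "ctx u x w" _ c] ctx_smult[of u c x w]
    by (simp add: fsmult_def)
qed

lemma cg_ctx: "cg (gens R) x y \<Longrightarrow> cg (gens R) (ctx u x w) (ctx u y w)"
  unfolding cg_def using ideal_ctx[of "\<lambda>m. x m - y m" R u w] by (simp add: ctx_diff)

lemma cg_word: "cg (gens R) (mono m) (mono m') \<Longrightarrow> cg (gens R) (mono (u @ m @ w)) (mono (u @ m' @ w))"
  using cg_ctx[of R "mono m" "mono m'" u w] by (simp add: ctx_mono)
lemma cg_word0: "cg (gens R) (mono m) Z \<Longrightarrow> cg (gens R) (mono (u @ m @ w)) Z"
  using cg_ctx[of R "mono m" Z u w] by (simp add: ctx_mono)

lemma cg_rel: "fminus x y \<in> R \<Longrightarrow> cg (gens R) x y"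
  unfolding cg_def using lspan_base[of "fminus x y" "gens R"]
  by (simp add: fminus_def gens_def)



abbreviation RR :: "('e \<Rightarrow> 'v) \<Rightarrow> ('e \<Rightarrow> 'v) \<Rightarrow> 'k itself \<Rightarrow> (('v,'e) gen list \<Rightarrow> 'k::field) set" where
  "RR s r T \<equiv> gens (lpa_rels s r)"

lemma ideal_eq: "lpa_ideal s r = lspan (gens (lpa_rels s r))"
  by (simp add: lpa_ideal_def ideal_gen_eq)

fun lv :: "('e \<Rightarrow> 'v) \<Rightarrow> ('e \<Rightarrow> 'v) \<Rightarrow> ('v,'e) gen \<Rightarrow> 'v" where
  "lv s r (V v) = v" | "lv s r (Ed e) = s e" | "lv s r (Gh e) = r e"
fun rv :: "('e \<Rightarrow> 'v) \<Rightarrow> ('e \<Rightarrow> 'v) \<Rightarrow> ('v,'e) gen \<Rightarrow> 'v" where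
  "rv s r (V v) = v" | "rv s r (Ed e) = r e" | "rv s r (Gh e) = s e"

context fixes s r :: "'e \<Rightarrow> 'v" begin

lemma rel_vv: "fminus (mono [V v, V v']) (if v = v' then mono [V v] else Z) \<in> (lpa_rels s r :: (('v,'e) gen list \<Rightarrow> 'k::field) set)"
  unfolding lpa_rels_def by blast

lemma W1: "cg (RR s r TYPE('k::field)) (mono [V (lv s r a), a]) (mono [a])"
proof (cases a)
  case (V v)
  then show ?thesis using rel_vv[of v v, where 'k='k] by (simp add: cg_rel)
next
  case (Ed e)
  have "fminus (mono [V (s e), Ed e]) (mono [Ed e]) \<in> (lpa_rels s r :: (('v,'e) gen list \<Rightarrow> 'k) set)"
    unfolding lpa_rels_def by blast
  then show ?thesis using Ed by (simp add: cg_rel)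
next
  case (Gh e)
  have "fminus (mono [V (r e), Gh e]) (mono [Gh e]) \<in> (lpa_rels s r :: (('v,'e) gen list \<Rightarrow> 'k) set)"
    unfolding lpa_rels_def by blast
  then show ?thesis using Gh by (simp add: cg_rel)
qed

lemma W2: "cg (RR s r TYPE('k::field)) (mono [a, V (rv s r a)]) (mono [a])"
proof (cases a)
  case (V v)
  then show ?thesis using rel_vv[of v v, where 'k='k] by (simp add: cg_rel)
next
  case (Ed e)
  have "fminus (mono [Ed e, V (r e)]) (mono [Ed e]) \<in> (lpa_rels s r :: (('v,'e) gen list \<Rightarrow> 'k) set)"
    unfolding lpa_rels_def by blast
  then show ?thesis using Ed by (simp add: cg_rel)
next
  case (Gh e)
  have "fminus (mono [Gh e, V (s e)]) (mono [Gh e]) \<in> (lpa_rels s r :: (('v,'e) gen list \<Rightarrow> 'k) set)"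
    unfolding lpa_rels_def by blast
  then show ?thesis using Gh by (simp add: cg_rel)
qed

lemma W3: "v \<noteq> v' \<Longrightarrow> cg (RR s r TYPE('k::field)) (mono [V v, V v']) Z"
  using rel_vv[of v v', where 'k='k] by (simp add: cg_rel)

lemma rel_ge: "fminus (mono [Gh e, Ed f]) (if e = f then mono [V (r e)] else Z) \<in> (lpa_rels s r :: (('v,'e) gen list \<Rightarrow> 'k::field) set)"
  unfolding lpa_rels_def by blast

lemma W4: "e \<noteq> f \<Longrightarrow> cg (RR s r TYPE('k::field)) (mono [Gh e, Ed f]) Z"
  using rel_ge[of e f, where 'k='k] by (simp add: cg_rel)

lemma W5: "cg (RR s r TYPE('k::field)) (mono [Gh e, Ed e]) (mono [V (r e)])"
  using rel_ge[of e e, where 'k='k] by (simp add: cg_rel)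

lemma W6: assumes "rv s r a \<noteq> lv s r b" shows "cg (RR s r TYPE('k::field)) (mono [a, b]) Z"
proof -
  have 1: "cg (RR s r TYPE('k)) (mono [a, b]) (mono [a, V (rv s r a), b])"
    using cg_word[OF W2[of a, where 'k='k], of "[]" "[b]"] by (simp add: cg_sym)
  have 2: "cg (RR s r TYPE('k)) (mono [a, V (rv s r a), b]) (mono [a, V (rv s r a), V (lv s r b), b])"
    using cg_word[OF W1[of b, where 'k='k], of "[a, V (rv s r a)]" "[]"] by (simp add: cg_sym)
  have 3: "cg (RR s r TYPE('k)) (mono [a, V (rv s r a), V (lv s r b), b]) Z"
    using cg_word0[OF W3[OF assms, where 'k='k], of "[a]" "[b]"] by simp
  show ?thesis using cg_trans[OF 1 cg_trans[OF 2 3]] .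
qed

end


lemma adj_adj[simp]: "adj (adj a) = a"
  by (cases a) auto

definition wstar :: "('v,'e) gen list \<Rightarrow> ('v,'e) gen list" where
  "wstar m = rev (map adj m)"

lemma wstar_app[simp]: "wstar (a @ b) = wstar b @ wstar a"
  by (simp add: wstar_def)
lemma wstar_wstar[simp]: "wstar (wstar a) = a"
  by (simp add: wstar_def rev_map comp_def)

lemma fstar_mono: "fstar (mono m) = (mono (wstar m) :: _ \<Rightarrow> 'k::field)"
proof -
  have "map adj (rev w) = m \<longleftrightarrow> w = wstar m" for w
    by (auto simp: wstar_def rev_map comp_def)
  then show ?thesis by (auto simp: fstar_def mono_def fun_eq_iff)
qed

definition EE :: "(nat \<Rightarrow> ('v,'e) gen list) \<Rightarrow> nat \<Rightarrow> nat \<Rightarrow> ('v,'e) gen list \<Rightarrow> 'k::field" where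
  "EE p i j = mono (p i @ wstar (p j))"

definition AA :: "(nat \<Rightarrow> ('v,'e) gen list) \<Rightarrow> nat \<Rightarrow> nat \<Rightarrow> ('v,'e) gen list \<Rightarrow> 'k::field" where
  "AA p i j = (\<lambda>m. EE p i j m - EE p j i m)"

context
  fixes s r :: "'e \<Rightarrow> 'v" and p :: "nat \<Rightarrow> ('v,'e) gen list" and v :: 'v
  assumes H0: "\<And>i j. i < 3 \<Longrightarrow> j < 3 \<Longrightarrow> i \<noteq> j \<Longrightarrow> cg (RR s r TYPE('k::field)) (mono (wstar (p i) @ p j)) Z"
  and H1: "\<And>i. i < 3 \<Longrightarrow> cg (RR s r TYPE('k)) (mono (wstar (p i) @ p i)) (mono [V v])"
  and H2: "\<And>i. i < 3 \<Longrightarrow> cg (RR s r TYPE('k)) (mono (p i @ [V v])) (mono (p i))"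
  and Hne: "\<And>i. i < 3 \<Longrightarrow> p i \<noteq> []"
begin

lemma prod_E: assumes "a < 3" "b < 3" "c < 3" "d < 3"
  shows "cg (RR s r TYPE('k)) (fmult (EE p a b) (EE p c d)) (if b = c then EE p a d else Z)"
proof -
  have eq: "fmult (EE p a b) (EE p c d) = (mono (p a @ (wstar (p b) @ p c) @ wstar (p d)) :: _ \<Rightarrow> 'k)"
    by (simp add: EE_def mono_app)
  show ?thesis
  proof (cases "b = c")
    case False
    then show ?thesis unfolding eq using cg_word0[OF H0[of b c], of "p a" "wstar (p d)"] assms by simp
  next
    case True
    have 1: "cg (RR s r TYPE('k)) (mono (p a @ (wstar (p b) @ p c) @ wstar (p d))) (mono (p a @ [V v] @ wstar (p d)))"
      using cg_word[OF H1[of b], of "p a" "wstar (p d)"] assms True by simp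
    have 2: "cg (RR s r TYPE('k)) (mono ([] @ (p a @ [V v]) @ wstar (p d))) (mono ([] @ p a @ wstar (p d)))"
      using cg_word[OF H2[of a], of "[]" "wstar (p d)"] assms by simp
    show ?thesis unfolding eq using True cg_trans[OF 1] 2 by (simp add: EE_def)
  qed
qed

lemma bracket_A: assumes "i < 3" "j < 3" "k < 3" "i \<noteq> j" "j \<noteq> k" "i \<noteq> k"
  shows "cg (RR s r TYPE('k)) (fbracket (AA p i j) (AA p j k)) (AA p i k)"
proof -
  let ?S = "RR s r TYPE('k)"
  let ?E = "EE p :: nat \<Rightarrow> nat \<Rightarrow> _ \<Rightarrow> 'k"
  have exp: "fbracket (AA p i j) (AA p j k) = (\<lambda>w. ((fmult (?E i j) (?E j k) w - fmult (?E i j) (?E k j) w)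
     - (fmult (?E j i) (?E j k) w - fmult (?E j i) (?E k j) w))
     - ((fmult (?E j k) (?E i j) w - fmult (?E j k) (?E j i) w)
     - (fmult (?E k j) (?E i j) w - fmult (?E k j) (?E j i) w)))"
    by (simp add: fbracket_def fminus_def AA_def fmult_diff_left fmult_diff_right)
  have p1: "cg ?S (fmult (?E i j) (?E j k)) (?E i k)" using prod_E[of i j j k] assms by simp
  have p2: "cg ?S (fmult (?E i j) (?E k j)) Z" using prod_E[of i j k j] assms by simp
  have p3: "cg ?S (fmult (?E j i) (?E j k)) Z" using prod_E[of j i j k] assms by simp
  have p4: "cg ?S (fmult (?E j i) (?E k j)) Z" using prod_E[of j i k j] assms by simp
  have p5: "cg ?S (fmult (?E j k) (?E i j)) Z" using prod_E[of j k i j] assms by simp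
  have p6: "cg ?S (fmult (?E j k) (?E j i)) Z" using prod_E[of j k j i] assms by simp
  have p7: "cg ?S (fmult (?E k j) (?E i j)) Z" using prod_E[of k j i j] assms by simp
  have p8: "cg ?S (fmult (?E k j) (?E j i)) (?E k i)" using prod_E[of k j j i] assms by simp
  have c: "cg ?S (fbracket (AA p i j) (AA p j k)) (\<lambda>w. ((?E i k w - 0) - (0 - 0)) - ((0 - 0) - (0 - ?E k i w)))"
    unfolding exp by (rule cg_diff[OF cg_diff[OF cg_diff[OF p1 p2] cg_diff[OF p3 p4]] cg_diff[OF cg_diff[OF p5 p6] cg_diff[OF p7 p8]]])
  have "(\<lambda>w. ((?E i k w - 0) - (0 - 0)) - ((0 - 0) - (0 - ?E k i w))) = AA p i k"
    by (simp add: AA_def fun_eq_iff)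
  with c show ?thesis by simp
qed

lemma A_skew: assumes "i < 3" "k < 3"
  shows "fadd (fstar (AA p i k)) (AA p i k) = (Z :: _ \<Rightarrow> 'k)"
  by (simp add: fadd_def fstar_def AA_def EE_def fun_eq_iff fstar_mono[unfolded fstar_def fun_eq_iff, rule_format])

lemma A_free: assumes "i < 3" "k < 3"
  shows "(AA p i k :: _ \<Rightarrow> 'k) \<in> free_alg"
proof -
  have "{w. (AA p i k :: _ \<Rightarrow> 'k) w \<noteq> 0} \<subseteq> {p i @ wstar (p k), p k @ wstar (p i)}"
    by (auto simp: AA_def EE_def mono_def split: if_splits)
  then have "finite {w. (AA p i k :: _ \<Rightarrow> 'k) w \<noteq> 0}" by (rule finite_subset) simp
  moreover have "(AA p i k :: _ \<Rightarrow> 'k) [] = 0" using Hne assms by (simp add: AA_def EE_def mono_def)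
  ultimately show ?thesis by (simp add: free_alg_def)
qed

lemma A_derived: "i < 3 \<Longrightarrow> k < 3 \<Longrightarrow> i \<noteq> k \<Longrightarrow> (AA p i k :: _ \<Rightarrow> 'k) \<in> lpa_derived s r n"
proof (induction n arbitrary: i k)
  case 0
  then show ?case using A_skew[of i k] A_free[of i k] by (simp add: lspan.lspan_zero ideal_eq)
next
  case (Suc n)
  define j where "j = 3 - i - k"
  have ik: "i < 3" "k < 3" "i \<noteq> k" using Suc.prems by auto
  have j: "j < 3" "i \<noteq> j" "j \<noteq> k" proof -
    have "i = 0 \<or> i = 1 \<or> i = 2" "k = 0 \<or> k = 1 \<or> k = 2" using ik by auto
    then show "j < 3" "i \<noteq> j" "j \<noteq> k" using ik unfolding j_def by auto
  qed
  let ?b = "fbracket (AA p i j) (AA p j k) :: _ \<Rightarrow> 'k"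
  have "?b \<in> {fbracket a b | a b. a \<in> lpa_derived s r n \<and> b \<in> lpa_derived s r n}"
    using Suc.IH[of i j] Suc.IH[of j k] Suc.prems j by (intro CollectI exI[of _ "AA p i j"] exI[of _ "AA p j k"]) auto
  then have 1: "?b \<in> lspan ({fbracket a b | a b. a \<in> lpa_derived s r n \<and> b \<in> lpa_derived s r n} \<union> lpa_ideal s r)"
    by (intro lspan_base UnI1)
  have c: "cg (RR s r TYPE('k)) ?b (AA p i k)" by (rule bracket_A) (use ik j in auto)
  have "cg (RR s r TYPE('k)) (AA p i k) ?b" by (rule cg_sym[OF c])
  then have "(\<lambda>m. AA p i k m - ?b m) \<in> lpa_ideal s r" unfolding cg_def ideal_eq .
  then have 2: "(\<lambda>m. AA p i k m - ?b m) \<in> lspan ({fbracket a b | a b. a \<in> lpa_derived s r n \<and> b \<in> lpa_derived s r n} \<union> lpa_ideal s r)"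
    by (intro lspan_base UnI2)
  have "(\<lambda>m. ?b m + (AA p i k m - ?b m)) \<in> lspan ({fbracket a b | a b. a \<in> lpa_derived s r n \<and> b \<in> lpa_derived s r n} \<union> lpa_ideal s r)"
    by (rule lspan_add'[OF 1 2])
  moreover have "(\<lambda>m. ?b m + (AA p i k m - ?b m)) = AA p i k" by (simp add: fun_eq_iff)
  ultimately show ?case by (simp only: lpa_derived.simps)
qed

lemma not_solvable: assumes "i < 3" "k < 3" "i \<noteq> k" "(AA p i k :: _ \<Rightarrow> 'k) \<notin> lpa_ideal s r"
  shows "\<not> skew_lie_solvable s r TYPE('k)"
  using A_derived[OF assms(1-3)] assms(4) unfolding skew_lie_solvable_def by blast

end


type_synonym ('v,'e) st = "'v \<times> 'e list"

fun vpath :: "('e \<Rightarrow> 'v) \<Rightarrow> ('e \<Rightarrow> 'v) \<Rightarrow> 'v \<Rightarrow> 'e list \<Rightarrow> bool" where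
  "vpath s r v [] = True"
| "vpath s r v (e # es) = (s e = v \<and> vpath s r (r e) es)"

definition reduced :: "('e \<Rightarrow> 'v) \<Rightarrow> ('v \<Rightarrow> 'e) \<Rightarrow> 'e list \<Rightarrow> bool" where
  "reduced s g es \<longleftrightarrow> es = [] \<or> \<not> (regular s (s (last es)) \<and> last es = g (s (last es)))"

definition valid :: "('e \<Rightarrow> 'v) \<Rightarrow> ('e \<Rightarrow> 'v) \<Rightarrow> ('v \<Rightarrow> 'e) \<Rightarrow> ('v,'e) st \<Rightarrow> bool" where
  "valid s r g p \<longleftrightarrow> vpath s r (fst p) (snd p) \<and> reduced s g (snd p)"

fun act :: "('e \<Rightarrow> 'v) \<Rightarrow> ('e \<Rightarrow> 'v) \<Rightarrow> ('v \<Rightarrow> 'e) \<Rightarrow> ('v,'e) gen \<Rightarrow> ('v,'e) st \<Rightarrow> ('v,'e) st option" where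
  "act s r g (V u) (v, es) = (if u = v then Some (v, es) else None)"
| "act s r g (Ed e) (v, es) = (if r e = v then
      (if es = [] \<and> regular s (s e) \<and> e = g (s e) then Some (s e, []) else Some (s e, e # es)) else None)"
| "act s r g (Gh e) (v, []) = (if regular s v \<and> e = g v then Some (r e, []) else None)"
| "act s r g (Gh e) (v, e' # es) = (if e = e' then Some (r e, es) else None)"

fun phi :: "('e \<Rightarrow> 'v) \<Rightarrow> ('e \<Rightarrow> 'v) \<Rightarrow> ('v \<Rightarrow> 'e) \<Rightarrow> ('v,'e) gen list \<Rightarrow> ('v,'e) st \<Rightarrow> ('v,'e) st option" where
  "phi s r g [] p = Some p"
| "phi s r g (a # m) p = Option.bind (phi s r g m p) (act s r g a)"

fun H :: "('a \<Rightarrow> 'k::field) \<Rightarrow> 'a option \<Rightarrow> 'k" where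
  "H h None = 0" | "H h (Some q) = h q"

lemma phi_app: "phi s r g (u @ m) p = Option.bind (phi s r g m p) (phi s r g u)"
  by (induction u) (auto simp: bind_assoc)

lemma H_bind: "H h (Option.bind oo f) = H (\<lambda>q. H h (f q)) oo"
  by (cases oo) auto

definition TT :: "('e \<Rightarrow> 'v) \<Rightarrow> ('e \<Rightarrow> 'v) \<Rightarrow> ('v \<Rightarrow> 'e) \<Rightarrow> (('v,'e) gen list \<Rightarrow> 'k::field) \<Rightarrow> ('v,'e) st \<Rightarrow> (('v,'e) st \<Rightarrow> 'k) \<Rightarrow> 'k" where
  "TT s r g x p h = (\<Sum>m\<in>{m. x m \<noteq> 0}. x m * H h (phi s r g m p))"

lemma TT_S: assumes "finite S" "{m. x m \<noteq> 0} \<subseteq> S"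
  shows "TT s r g x p h = (\<Sum>m\<in>S. x m * H h (phi s r g m p))"
  unfolding TT_def by (rule sum.mono_neutral_left) (use assms in auto)

definition fin :: "('g list \<Rightarrow> 'k::field) \<Rightarrow> bool" where
  "fin x \<longleftrightarrow> finite {m. x m \<noteq> 0}"

lemma TT_add: assumes "fin x" "fin y"
  shows "TT s r g (\<lambda>m. x m + y m) p h = TT s r g x p h + TT s r g y p h"
proof -
  let ?S = "{m. x m \<noteq> 0} \<union> {m. y m \<noteq> 0}"
  have f: "finite ?S" using assms by (simp add: fin_def)
  have "TT s r g (\<lambda>m. x m + y m) p h = (\<Sum>m\<in>?S. (x m + y m) * H h (phi s r g m p))"
    by (rule TT_S[OF f]) auto
  also have "\<dots> = (\<Sum>m\<in>?S. x m * H h (phi s r g m p)) + (\<Sum>m\<in>?S. y m * H h (phi s r g m p))"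
    by (simp add: distrib_right sum.distrib)
  also have "\<dots> = TT s r g x p h + TT s r g y p h"
    using TT_S[OF f, of x] TT_S[OF f, of y] by auto
  finally show ?thesis .
qed

lemma TT_smult: assumes "fin x"
  shows "TT s r g (\<lambda>m. c * x m) p h = c * TT s r g x p h"
proof -
  let ?S = "{m. x m \<noteq> 0}"
  have f: "finite ?S" using assms by (simp add: fin_def)
  have "TT s r g (\<lambda>m. c * x m) p h = (\<Sum>m\<in>?S. (c * x m) * H h (phi s r g m p))"
    by (rule TT_S[OF f]) auto
  also have "\<dots> = c * TT s r g x p h"
    using TT_S[OF f, of x] by (simp add: sum_distrib_left mult.assoc)
  finally show ?thesis .
qed

lemma suppL: "{m. fmult (mono u) x m \<noteq> (0::'k::field)} = (\<lambda>m. u @ m) ` {m. x m \<noteq> 0}"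
proof
  show "{m. fmult (mono u) x m \<noteq> 0} \<subseteq> (\<lambda>m. u @ m) ` {m. x m \<noteq> 0}"
  proof
    fix m assume "m \<in> {m. fmult (mono u) x m \<noteq> 0}"
    then have nz: "fmult (mono u) x m \<noteq> 0" by simp
    then obtain m' where "m = u @ m'" using L0 by blast
    with nz show "m \<in> (\<lambda>m. u @ m) ` {m. x m \<noteq> 0}" by auto
  qed
qed auto

lemma suppR: "{m. fmult x (mono w) m \<noteq> (0::'k::field)} = (\<lambda>m. m @ w) ` {m. x m \<noteq> 0}"
proof
  show "{m. fmult x (mono w) m \<noteq> 0} \<subseteq> (\<lambda>m. m @ w) ` {m. x m \<noteq> 0}"
  proof
    fix m assume "m \<in> {m. fmult x (mono w) m \<noteq> 0}"
    then have nz: "fmult x (mono w) m \<noteq> 0" by simp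
    then obtain m' where "m = m' @ w" using R0 by blast
    with nz show "m \<in> (\<lambda>m. m @ w) ` {m. x m \<noteq> 0}" by auto
  qed
qed auto

lemma fin_L: "fin x \<Longrightarrow> fin (fmult (mono u) x)"
  by (simp add: fin_def suppL)
lemma fin_R: "fin x \<Longrightarrow> fin (fmult x (mono w))"
  by (simp add: fin_def suppR)

lemma TT_L: "TT s r g (fmult (mono u) x) p h = TT s r g x p (\<lambda>q. H h (phi s r g u q))"
proof -
  have "TT s r g (fmult (mono u) x) p h = (\<Sum>m\<in>(\<lambda>m. u @ m) ` {m. x m \<noteq> 0}. fmult (mono u) x m * H h (phi s r g m p))"
    unfolding TT_def suppL ..
  also have "\<dots> = (\<Sum>m\<in>{m. x m \<noteq> 0}. x m * H h (phi s r g (u @ m) p))"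
    by (subst sum.reindex) (auto simp: inj_on_def)
  also have "\<dots> = TT s r g x p (\<lambda>q. H h (phi s r g u q))"
    unfolding TT_def phi_app H_bind ..
  finally show ?thesis .
qed

lemma TT_R: "TT s r g (fmult x (mono w)) p h = H (\<lambda>p'. TT s r g x p' h) (phi s r g w p)"
proof -
  have "TT s r g (fmult x (mono w)) p h = (\<Sum>m\<in>(\<lambda>m. m @ w) ` {m. x m \<noteq> 0}. fmult x (mono w) m * H h (phi s r g m p))"
    unfolding TT_def suppR ..
  also have "\<dots> = (\<Sum>m\<in>{m. x m \<noteq> 0}. x m * H h (phi s r g (m @ w) p))"
    by (subst sum.reindex) (auto simp: inj_on_def)
  also have "\<dots> = H (\<lambda>p'. TT s r g x p' h) (phi s r g w p)"
    unfolding TT_def phi_app by (cases "phi s r g w p") auto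
  finally show ?thesis .
qed



context
  fixes s r :: "'e \<Rightarrow> 'v" and g :: "'v \<Rightarrow> 'e"
  assumes gH: "\<And>v. regular s v \<Longrightarrow> s (g v) = v"
begin

lemma valid_act: assumes "valid s r g p" "act s r g a p = Some q" shows "valid s r g q"
proof -
  obtain v es where p: "p = (v, es)" by (cases p)
  show ?thesis
  proof (cases a)
    case (V u) then show ?thesis using assms p by (auto split: if_splits)
  next
    case (Ed e)
    then show ?thesis using assms p by (cases es) (auto simp: valid_def reduced_def split: if_splits)
  next
    case (Gh e)
    then show ?thesis using assms p
      by (cases es) (auto simp: valid_def reduced_def gH split: if_splits)
  qed
qed

lemma valid_phi: "valid s r g p \<Longrightarrow> phi s r g m p = Some q \<Longrightarrow> valid s r g q"
proof (induction m arbitrary: q)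
  case Nil then show ?case by simp
next
  case (Cons a m)
  then obtain q' where "phi s r g m p = Some q'" "act s r g a q' = Some q"
    by (cases "phi s r g m p") auto
  then show ?case using Cons valid_act by blast
qed

lemma Tmm: "a \<noteq> b \<Longrightarrow> TT s r g (fminus (mono a) (mono b) :: _ \<Rightarrow> 'k::field) p h = H h (phi s r g a p) - H h (phi s r g b p)"
  by (subst TT_S[of "{a, b}"]) (auto simp: fminus_def mono_def)

lemma Tm0: "TT s r g (fminus (mono a) Z :: _ \<Rightarrow> 'k::field) p h = H h (phi s r g a p)"
  by (subst TT_S[of "{a}"]) (auto simp: fminus_def mono_def)

lemma fin_mm: "fin (fminus (mono a) (mono b) :: _ \<Rightarrow> 'k::field)"
  unfolding fin_def by (rule finite_subset[of _ "{a, b}"]) (auto simp: fminus_def mono_def)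
lemma fin_m0: "fin (fminus (mono a) Z :: _ \<Rightarrow> 'k::field)"
  unfolding fin_def by (rule finite_subset[of _ "{a}"]) (auto simp: fminus_def mono_def)

lemma e1: "phi s r g [V v, V v'] p = (if v = v' then phi s r g [V v] p else None)"
  by (cases p) auto
lemma e2: "phi s r g [V (s e), Ed e] p = phi s r g [Ed e] p"
  by (cases p) auto
lemma e3: "phi s r g [Ed e, V (r e)] p = phi s r g [Ed e] p"
  by (cases p) auto
lemma e4: "phi s r g [V (r e), Gh e] p = phi s r g [Gh e] p"
  apply (cases p) subgoal for v es by (cases es) auto done
lemma e5: "valid s r g p \<Longrightarrow> phi s r g [Gh e, V (s e)] p = phi s r g [Gh e] p"
  apply (cases p) subgoal for v es by (cases es) (auto simp: valid_def gH) done
lemma e6: "phi s r g [Gh e, Ed f] p = (if e = f then phi s r g [V (r e)] p else None)"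
  apply (cases p) subgoal for v es by (cases es) (auto simp: gH) done

lemma sum_mono_delta: "finite S \<Longrightarrow> w \<in> S \<Longrightarrow> (\<Sum>m\<in>S. mono w m * X m) = (X w :: 'k::field)"
  by (simp add: mono_def if_distrib[of "\<lambda>c. c * _"] cong: if_cong)

lemma e7: assumes "valid s r g p" "regular s v'"
  shows "H h (phi s r g [V v'] p) = (\<Sum>e\<in>{e. s e = v'}. H h (phi s r g [Ed e, Gh e] p))"
proof -
  obtain v es where p: "p = (v, es)" by (cases p)
  have fE: "finite {e. s e = v'}" using assms(2) by (simp add: regular_def)
  show ?thesis
  proof (cases "v = v'")
    case False
    have "H h (phi s r g [Ed e, Gh e] p) = 0" if "s e = v'" for e
      using assms(1) p False that gH by (cases es) (auto simp: valid_def)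
    then show ?thesis using False p by simp
  next
    case True
    show ?thesis
    proof (cases es)
      case Nil
      have "(\<Sum>e\<in>{e. s e = v'}. H h (phi s r g [Ed e, Gh e] p)) = (\<Sum>e\<in>{e. s e = v'}. if e = g v then h p else 0)"
        using True p Nil assms(2) gH by (intro sum.cong) auto
      also have "\<dots> = h p" using gH[OF assms(2)] True using fE by (simp add: sum.delta)
      finally show ?thesis using True p by simp
    next
      case (Cons e' es')
      have red: "\<not> (es' = [] \<and> regular s (s e') \<and> e' = g (s e'))"
        using assms(1) p Cons by (auto simp: valid_def reduced_def)
      have se: "s e' = v" using assms(1) p Cons by (simp add: valid_def)
      have "(\<Sum>e\<in>{e. s e = v'}. H h (phi s r g [Ed e, Gh e] p)) = (\<Sum>e\<in>{e. s e = v'}. if e = e' then h p else 0)"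
        using True p Cons red se by (intro sum.cong) auto
      also have "\<dots> = h p" using se True using fE by (simp add: sum.delta)
      finally show ?thesis using True p by simp
    qed
  qed
qed

lemma T7: assumes "regular s v'"
  shows "TT s r g (fminus (mono [V v']) (\<lambda>w. \<Sum>e\<in>{e. s e = v'}. mono [Ed e, Gh e] w) :: _ \<Rightarrow> 'k::field) p h
    = H h (phi s r g [V v'] p) - (\<Sum>e\<in>{e. s e = v'}. H h (phi s r g [Ed e, Gh e] p))"
    (is "TT s r g ?x p h = _")
  and "fin (fminus (mono [V v']) (\<lambda>w. \<Sum>e\<in>{e. s e = v'}. mono [Ed e, Gh e] w) :: _ \<Rightarrow> 'k)"
proof -
  let ?E = "{e. s e = v'}"
  let ?S = "insert [V v'] ((\<lambda>e. [Ed e, Gh e]) ` ?E)"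
  have fE: "finite ?E" using assms by (simp add: regular_def)
  then have fS: "finite ?S" by simp
  have sub: "{m. ?x m \<noteq> 0} \<subseteq> ?S"
  proof
    fix m assume "m \<in> {m. ?x m \<noteq> 0}"
    then have "mono [V v'] m \<noteq> (0::'k) \<or> (\<Sum>e\<in>?E. mono [Ed e, Gh e] m :: 'k) \<noteq> 0"
      by (auto simp: fminus_def)
    then show "m \<in> ?S"
    proof
      assume "mono [V v'] m \<noteq> (0::'k)" then show ?thesis by (auto simp: mono_def split: if_splits)
    next
      assume "(\<Sum>e\<in>?E. mono [Ed e, Gh e] m :: 'k) \<noteq> 0"
      then obtain e where "e \<in> ?E" "mono [Ed e, Gh e] m \<noteq> (0::'k)" by (meson sum.neutral)
      then show ?thesis by (auto simp: mono_def split: if_splits)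
    qed
  qed
  show "fin ?x" unfolding fin_def using sub fS by (rule finite_subset)
  let ?X = "\<lambda>m. H h (phi s r g m p)"
  have "TT s r g ?x p h = (\<Sum>m\<in>?S. ?x m * ?X m)" by (rule TT_S[OF fS sub])
  also have "\<dots> = (\<Sum>m\<in>?S. mono [V v'] m * ?X m) - (\<Sum>m\<in>?S. \<Sum>e\<in>?E. mono [Ed e, Gh e] m * ?X m)"
    by (simp add: fminus_def left_diff_distrib sum_subtractf sum_distrib_right)
  also have "(\<Sum>m\<in>?S. \<Sum>e\<in>?E. mono [Ed e, Gh e] m * ?X m) = (\<Sum>e\<in>?E. \<Sum>m\<in>?S. mono [Ed e, Gh e] m * ?X m)"
    by (rule sum.swap)
  also have "\<dots> = (\<Sum>e\<in>?E. ?X [Ed e, Gh e])"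
    by (intro sum.cong refl sum_mono_delta[OF fS]) auto
  also have "(\<Sum>m\<in>?S. mono [V v'] m * ?X m) = ?X [V v']"
    by (intro sum_mono_delta[OF fS]) auto
  finally show "TT s r g ?x p h = H h (phi s r g [V v'] p) - (\<Sum>e\<in>?E. H h (phi s r g [Ed e, Gh e] p))" .
qed

lemma rel_zero: assumes "x \<in> (lpa_rels s r :: (_ \<Rightarrow> 'k::field) set)"
  shows "fin x \<and> (\<forall>p h. valid s r g p \<longrightarrow> TT s r g x p h = 0)"
  using assms unfolding lpa_rels_def
proof (elim UnE CollectE exE conjE)
  fix v v' assume x: "x = fminus (mono [V v, V v']) (if v = v' then mono [V v] else Z)"
  show ?thesis
  proof (cases "v = v'")
    case True then show ?thesis using x by (simp add: Tmm fin_mm e1)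
  next
    case False then show ?thesis using x by (simp add: Tm0 fin_m0 e1)
  qed
next
  fix e assume "x = fminus (mono [V (s e), Ed e]) (mono [Ed e])"
  then show ?thesis by (simp add: Tmm fin_mm e2)
next
  fix e assume "x = fminus (mono [Ed e, V (r e)]) (mono [Ed e])"
  then show ?thesis by (simp add: Tmm fin_mm e3)
next
  fix e assume "x = fminus (mono [V (r e), Gh e]) (mono [Gh e])"
  then show ?thesis by (simp add: Tmm fin_mm e4 del: phi.simps)
next
  fix e assume "x = fminus (mono [Gh e, V (s e)]) (mono [Gh e])"
  then show ?thesis by (simp add: Tmm fin_mm e5 del: phi.simps)
next
  fix e f assume x: "x = fminus (mono [Gh e, Ed f]) (if e = f then mono [V (r e)] else Z)"
  show ?thesis
  proof (cases "e = f")
    case True then show ?thesis using x by (simp add: Tmm fin_mm e6)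
  next
    case False then show ?thesis using x by (simp add: Tm0 fin_m0 e6)
  qed
next
  fix v' assume x: "x = fminus (mono [V v']) (\<lambda>w. \<Sum>e\<in>{e. s e = v'}. mono [Ed e, Gh e] w)"
    and reg: "regular s v'"
  have "TT s r g x p h = 0" if "valid s r g p" for p h
    using x T7(1)[OF reg, of p h] e7[OF that reg, of h] by simp
  then show ?thesis using x T7(2)[OF reg] by blast
qed

lemma gens_zero: assumes "x \<in> gens (lpa_rels s r :: (_ \<Rightarrow> 'k::field) set)"
  shows "fin x \<and> (\<forall>p h. valid s r g p \<longrightarrow> TT s r g x p h = 0)"
proof -
  obtain u y w where y: "y \<in> (lpa_rels s r :: (_ \<Rightarrow> 'k) set)" and x: "x = ctx u y w"
    using gens_ctx[OF assms] by blast
  have yz: "fin y" "\<And>p h. valid s r g p \<Longrightarrow> TT s r g y p h = 0" using rel_zero[OF y] by auto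
  have "fin x" using yz(1) x by (simp add: ctx_def fin_L fin_R)
  moreover have "TT s r g x p h = 0" if "valid s r g p" for p h
  proof (cases "phi s r g w p")
    case None then show ?thesis using x by (simp add: ctx_def TT_L TT_R)
  next
    case (Some p')
    then have "valid s r g p'" using valid_phi[OF that] by blast
    then show ?thesis using x Some yz(2) by (simp add: ctx_def TT_L TT_R)
  qed
  ultimately show ?thesis by blast
qed

lemma ideal_zero: assumes "x \<in> lpa_ideal s r"
  shows "fin (x :: _ \<Rightarrow> 'k::field) \<and> (\<forall>p h. valid s r g p \<longrightarrow> TT s r g x p h = 0)"
  using assms unfolding ideal_eq
proof (induction x rule: lspan.induct)
  case lspan_zero
  then show ?case by (simp add: fin_def TT_def)
next
  case (lspan_base x)
  then show ?case by (rule gens_zero)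
next
  case (lspan_add x y)
  have "fin (\<lambda>m. x m + y m)" using lspan_add.IH unfolding fin_def
    by (rule_tac finite_subset[of _ "{m. x m \<noteq> 0} \<union> {m. y m \<noteq> 0}"]) auto
  then show ?case using lspan_add.IH by (simp add: fadd_def TT_add)
next
  case (lspan_smult x c)
  have "fin (\<lambda>m. c * x m)" using lspan_smult.IH unfolding fin_def
    by (rule_tac finite_subset[of _ "{m. x m \<noteq> 0}"]) auto
  then show ?case using lspan_smult.IH by (simp add: fsmult_def TT_smult)
qed

end


context fixes s r :: "'e \<Rightarrow> 'v" begin


lemma cgw: assumes "cg (RR s r TYPE('k::field)) (mono m) (mono m')" "x = u @ m @ w" "y = u @ m' @ w" shows "cg (RR s r TYPE('k::field)) (mono x) (mono y)"
  using cg_word[OF assms(1), of u w] assms(2,3) by simp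
lemma cgw0: assumes "cg (RR s r TYPE('k::field)) (mono m) Z" "x = u @ m @ w" shows "cg (RR s r TYPE('k::field)) (mono x) Z"
  using cg_word0[OF assms(1), of u w] assms(2) by simp

lemma V_Ed: "s e = u \<Longrightarrow> cg (RR s r TYPE('k::field)) (mono [V u, Ed e]) (mono [Ed e])"
  using W1[where s=s and r=r and a="Ed e"] by simp
lemma Ed_V: "r e = u \<Longrightarrow> cg (RR s r TYPE('k::field)) (mono [Ed e, V u]) (mono [Ed e])"
  using W2[where s=s and r=r and a="Ed e"] by simp
lemma VV: "cg (RR s r TYPE('k::field)) (mono [V u, V u]) (mono [V u])"
  using W1[where s=s and r=r and a="V u"] by simp
lemma GhEd: "r e = u \<Longrightarrow> cg (RR s r TYPE('k::field)) (mono [Gh e, Ed e]) (mono [V u])"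
  using W5[where s=s and r=r and e=e] by simp
lemma GhEd0: "e \<noteq> f \<Longrightarrow> cg (RR s r TYPE('k::field)) (mono [Gh e, Ed f]) Z"
  by (rule W4)
lemma GhV0: "s e \<noteq> u \<Longrightarrow> cg (RR s r TYPE('k::field)) (mono [Gh e, V u]) Z"
  using W6[where s=s and r=r and a="Gh e" and b="V u"] by simp
lemma VEd0: "u \<noteq> s e \<Longrightarrow> cg (RR s r TYPE('k::field)) (mono [V u, Ed e]) Z"
  using W6[where s=s and r=r and a="V u" and b="Ed e"] by simp

lemma fst_act: "act s r g a p = Some q \<Longrightarrow> fst q = lv s r a"
  apply (cases p) subgoal for v es by (cases a; cases es) (auto split: if_splits) done

lemma fst_phi: "phi s r g (a # m) p = Some q \<Longrightarrow> fst q = lv s r a"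
  by (cases "phi s r g m p") (auto intro: fst_act)

lemma finish:
  fixes P :: "nat \<Rightarrow> ('v,'e) gen list" and g :: "'v \<Rightarrow> 'e"
  assumes H0: "\<And>i j. i < 3 \<Longrightarrow> j < 3 \<Longrightarrow> i \<noteq> j \<Longrightarrow> cg (RR s r TYPE('k::field)) (mono (wstar (P i) @ P j)) Z"
  and H1: "\<And>i. i < 3 \<Longrightarrow> cg (RR s r TYPE('k)) (mono (wstar (P i) @ P i)) (mono [V v])"
  and H2: "\<And>i. i < 3 \<Longrightarrow> cg (RR s r TYPE('k)) (mono (P i @ [V v])) (mono (P i))"
  and Hne: "\<And>i. i < 3 \<Longrightarrow> P i \<noteq> []"
  and ik: "i < 3" "k < 3" "i \<noteq> k"
  and gH: "\<And>v. regular s v \<Longrightarrow> s (g v) = v"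
  and qs: "valid s r g qs"
  and ab: "P i @ wstar (P k) \<noteq> P k @ wstar (P i)"
  and nz: "H h (phi s r g (P i @ wstar (P k)) qs) - H h (phi s r g (P k @ wstar (P i)) qs) \<noteq> (0::'k)"
  shows "\<not> skew_lie_solvable s r TYPE('k)"
proof (rule not_solvable[OF H0 H1 H2 Hne ik])
  have eq: "(AA P i k :: _ \<Rightarrow> 'k) = fminus (mono (P i @ wstar (P k))) (mono (P k @ wstar (P i)))"
    by (simp add: AA_def EE_def fminus_def fun_eq_iff)
  show "(AA P i k :: _ \<Rightarrow> 'k) \<notin> lpa_ideal s r"
  proof
    assume "(AA P i k :: _ \<Rightarrow> 'k) \<in> lpa_ideal s r"
    then have "TT s r g (AA P i k :: _ \<Rightarrow> 'k) qs h = 0" using ideal_zero[where s=s and r=r and g=g, OF gH] qs by blast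
    then show False using nz Tmm[where s=s and r=r and g=g, OF gH ab, of qs h] unfolding eq by simp
  qed
qed

end


lemma idx3: "(i::nat) < 3 \<Longrightarrow> i = 0 \<or> i = 1 \<or> i = 2"
  by auto

lemma gSome: "regular s u \<Longrightarrow> s (SOME e. s e = u) = u"
  unfolding regular_def by (metis (mono_tags, lifting) empty_Collect_eq someI_ex)

lemma shapeA:
  fixes s r :: "'e \<Rightarrow> 'v"
  assumes ef: "e \<noteq> f" and re: "r e = v" and rf: "r f = v" and se: "s e \<noteq> v" and sf: "s f \<noteq> v"
  shows "\<not> skew_lie_solvable s r TYPE('k::field)"
proof -
  define p where "p = (\<lambda>i::nat. if i = 0 then [Ed e] else if i = 1 then [Ed f] else [V v :: ('v,'e) gen])"
  define g where "g = (\<lambda>u. SOME e. s e = u)"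
  have gH: "\<And>u. regular s u \<Longrightarrow> s (g u) = u" unfolding g_def by (rule gSome)
  have f01: "cg (RR s r TYPE('k)) (mono [Gh e, Ed f]) Z" using ef by (rule GhEd0)
  have f10: "cg (RR s r TYPE('k)) (mono [Gh f, Ed e]) Z" using ef by (intro GhEd0) auto
  have f02: "cg (RR s r TYPE('k)) (mono [Gh e, V v]) Z" using se by (rule GhV0)
  have f20: "cg (RR s r TYPE('k)) (mono [V v, Ed e]) Z" using se by (intro VEd0) auto
  have f12: "cg (RR s r TYPE('k)) (mono [Gh f, V v]) Z" using sf by (rule GhV0)
  have f21: "cg (RR s r TYPE('k)) (mono [V v, Ed f]) Z" using sf by (intro VEd0) auto
  have f00: "cg (RR s r TYPE('k)) (mono [Gh e, Ed e]) (mono [V v])" using re by (rule GhEd)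
  have f11: "cg (RR s r TYPE('k)) (mono [Gh f, Ed f]) (mono [V v])" using rf by (rule GhEd)
  have f22: "cg (RR s r TYPE('k)) (mono [V v, V v]) (mono [V v])" by (rule VV)
  have g0: "cg (RR s r TYPE('k)) (mono [Ed e, V v]) (mono [Ed e])" using re by (rule Ed_V)
  have g1: "cg (RR s r TYPE('k)) (mono [Ed f, V v]) (mono [Ed f])" using rf by (rule Ed_V)
  show ?thesis
  proof (rule finish[where P=p and v=v and i=0 and k=2 and g=g and qs="(v, [])"
        and h="\<lambda>q. if fst q = s e then 1 else 0"])
    fix i j :: nat assume "i < 3" "j < 3" "i \<noteq> j"
    then show "cg (RR s r TYPE('k)) (mono (wstar (p i) @ p j)) Z"
      using idx3[OF \<open>i < 3\<close>] idx3[OF \<open>j < 3\<close>] \<open>i \<noteq> j\<close>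
      by (elim disjE) (simp_all add: p_def wstar_def f01 f10 f02 f20 f12 f21)
  next
    fix i :: nat assume "i < 3"
    then show "cg (RR s r TYPE('k)) (mono (wstar (p i) @ p i)) (mono [V v])"
      using idx3[OF \<open>i < 3\<close>] by (elim disjE) (simp_all add: p_def wstar_def f00 f11 f22)
  next
    fix i :: nat assume "i < 3"
    then show "cg (RR s r TYPE('k)) (mono (p i @ [V v])) (mono (p i))"
      using idx3[OF \<open>i < 3\<close>] by (elim disjE) (simp_all add: p_def wstar_def g0 g1 f22)
  next
    fix i :: nat assume "i < 3"
    then show "p i \<noteq> []" by (simp add: p_def)
  next
    show "valid s r g (v, [])" by (simp add: valid_def reduced_def)
  next
    show "p 0 @ wstar (p 2) \<noteq> p 2 @ wstar (p 0)" by (simp add: p_def wstar_def)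
  next
    show "H (\<lambda>q. if fst q = s e then 1 else 0) (phi s r g (p 0 @ wstar (p 2)) (v, [])) -
      H (\<lambda>q. if fst q = s e then 1 else 0) (phi s r g (p 2 @ wstar (p 0)) (v, [])) \<noteq> (0::'k)"
      using re se by (auto simp: p_def wstar_def)
  qed (use gH in auto)
qed

lemma shapeB:
  fixes s r :: "'e \<Rightarrow> 'v"
  assumes se: "s e = x" and re: "r e = y" and sf: "s f = y" and rf: "r f = v"
    and xy: "x \<noteq> y" and xv: "x \<noteq> v" and yv: "y \<noteq> v"
  shows "\<not> skew_lie_solvable s r TYPE('k::field)"
proof -
  have ef: "e \<noteq> f" using se sf xy by auto
  define p where "p = (\<lambda>i::nat. if i = 0 then [Ed e, Ed f] else if i = 1 then [Ed f] else [V v :: ('v,'e) gen])"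
  define g where "g = (\<lambda>u. SOME e. s e = u)"
  have gH: "\<And>u. regular s u \<Longrightarrow> s (g u) = u" unfolding g_def by (rule gSome)
  have f01: "cg (RR s r TYPE('k)) (mono [Gh f, Gh e, Ed f]) Z"
    by (rule cgw0[OF GhEd0[OF ef], where u="[Gh f]" and w="[]"]) simp
  have f10: "cg (RR s r TYPE('k)) (mono [Gh f, Ed e, Ed f]) Z"
    by (rule cgw0[OF GhEd0, where u="[]" and w="[Ed f]"]) (use ef in auto)
  have f02: "cg (RR s r TYPE('k)) (mono [Gh f, Gh e, V v]) Z"
    by (rule cgw0[OF GhV0, where u="[Gh f]" and w="[]"]) (use se xv in auto)
  have f20: "cg (RR s r TYPE('k)) (mono [V v, Ed e, Ed f]) Z"
    by (rule cgw0[OF VEd0, where u="[]" and w="[Ed f]"]) (use se xv in auto)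
  have f12: "cg (RR s r TYPE('k)) (mono [Gh f, V v]) Z" using sf yv by (intro GhV0) auto
  have f21: "cg (RR s r TYPE('k)) (mono [V v, Ed f]) Z" using sf yv by (intro VEd0) auto
  have f00a: "cg (RR s r TYPE('k)) (mono [Gh f, Gh e, Ed e, Ed f]) (mono [Gh f, V y, Ed f])"
    by (rule cgw[OF GhEd[where r=r, OF re], where u="[Gh f]" and w="[Ed f]"]) simp_all
  have f00b: "cg (RR s r TYPE('k)) (mono [Gh f, V y, Ed f]) (mono [Gh f, Ed f])"
    by (rule cgw[OF V_Ed[where s=s, OF sf], where u="[Gh f]" and w="[]"]) simp_all
  have f11: "cg (RR s r TYPE('k)) (mono [Gh f, Ed f]) (mono [V v])" using rf by (rule GhEd)
  have f00: "cg (RR s r TYPE('k)) (mono [Gh f, Gh e, Ed e, Ed f]) (mono [V v])"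
    by (rule cg_trans[OF f00a cg_trans[OF f00b f11]])
  have f22: "cg (RR s r TYPE('k)) (mono [V v, V v]) (mono [V v])" by (rule VV)
  have g0: "cg (RR s r TYPE('k)) (mono [Ed e, Ed f, V v]) (mono [Ed e, Ed f])"
    by (rule cgw[OF Ed_V[where r=r, OF rf], where u="[Ed e]" and w="[]"]) simp_all
  have g1: "cg (RR s r TYPE('k)) (mono [Ed f, V v]) (mono [Ed f])" using rf by (rule Ed_V)
  show ?thesis
  proof (rule finish[where P=p and v=v and i=0 and k=2 and g=g and qs="(v, [])"
        and h="\<lambda>q. if fst q = x then 1 else 0"])
    fix i j :: nat assume "i < 3" "j < 3" "i \<noteq> j"
    then show "cg (RR s r TYPE('k)) (mono (wstar (p i) @ p j)) Z"
      using idx3[OF \<open>i < 3\<close>] idx3[OF \<open>j < 3\<close>] \<open>i \<noteq> j\<close>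
      by (elim disjE) (simp_all add: p_def wstar_def f01 f10 f02 f20 f12 f21)
  next
    fix i :: nat assume "i < 3"
    then show "cg (RR s r TYPE('k)) (mono (wstar (p i) @ p i)) (mono [V v])"
      using idx3[OF \<open>i < 3\<close>] by (elim disjE) (simp_all add: p_def wstar_def f00 f11 f22)
  next
    fix i :: nat assume "i < 3"
    then show "cg (RR s r TYPE('k)) (mono (p i @ [V v])) (mono (p i))"
      using idx3[OF \<open>i < 3\<close>] by (elim disjE) (simp_all add: p_def wstar_def g0 g1 f22)
  next
    fix i :: nat assume "i < 3"
    then show "p i \<noteq> []" by (simp add: p_def)
  next
    show "valid s r g (v, [])" by (simp add: valid_def reduced_def)
  next
    show "p 0 @ wstar (p 2) \<noteq> p 2 @ wstar (p 0)" by (simp add: p_def wstar_def)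
  next
    show "H (\<lambda>q. if fst q = x then 1 else 0) (phi s r g (p 0 @ wstar (p 2)) (v, [])) -
      H (\<lambda>q. if fst q = x then 1 else 0) (phi s r g (p 2 @ wstar (p 0)) (v, [])) \<noteq> (0::'k)"
    proof -
      let ?h = "\<lambda>q. if fst q = x then 1 else 0 :: 'k"
      have a: "p 0 @ wstar (p 2) = [Ed e, Ed f, V v]" "p 2 @ wstar (p 0) = [V v, Gh f, Gh e]"
        by (simp_all add: p_def wstar_def)
      have "phi s r g [Ed e, Ed f, V v] (v, []) \<noteq> None"
        using rf re sf gH[of y] by (auto split: if_split)
      then obtain q where q: "phi s r g [Ed e, Ed f, V v] (v, []) = Some q" by blast
      have "fst q = x" using fst_phi[OF q] se by simp
      then have 1: "H ?h (phi s r g [Ed e, Ed f, V v] (v, [])) = 1" using q by simp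
      have 2: "H ?h (phi s r g [V v, Gh f, Gh e] (v, [])) = 0"
      proof (cases "phi s r g [V v, Gh f, Gh e] (v, [])")
        case (Some q')
        then have "fst q' = v" using fst_phi[OF Some] by simp
        then show ?thesis using Some xv by simp
      qed simp
      show ?thesis unfolding a using 1 2 by simp
    qed
  qed (use gH in auto)
qed

lemma shapeC:
  fixes s r :: "'e \<Rightarrow> 'v"
  assumes se: "s e = w" and re: "r e = w" and sf: "s f = w" and rf: "r f = z" and ef: "e \<noteq> f"
  shows "\<not> skew_lie_solvable s r TYPE('k::field)"
proof -
  have fe: "f \<noteq> e" using ef by auto
  define p where "p = (\<lambda>i::nat. if i = 0 then [Ed f] else if i = 1 then [Ed e, Ed f] else [Ed e, Ed e, Ed f :: ('v,'e) gen])"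
  define g where "g = (\<lambda>u. if u = w then e else SOME e. s e = u)"
  have gH: "\<And>u. regular s u \<Longrightarrow> s (g u) = u" unfolding g_def using gSome se by auto
  have f01: "cg (RR s r TYPE('k)) (mono [Gh f, Ed e, Ed f]) Z"
    by (rule cgw0[OF GhEd0[OF fe], where u="[]" and w="[Ed f]"]) simp
  have f10: "cg (RR s r TYPE('k)) (mono [Gh f, Gh e, Ed f]) Z"
    by (rule cgw0[OF GhEd0[OF ef], where u="[Gh f]" and w="[]"]) simp
  have f02: "cg (RR s r TYPE('k)) (mono [Gh f, Ed e, Ed e, Ed f]) Z"
    by (rule cgw0[OF GhEd0[OF fe], where u="[]" and w="[Ed e, Ed f]"]) simp
  have f20: "cg (RR s r TYPE('k)) (mono [Gh f, Gh e, Gh e, Ed f]) Z"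
    by (rule cgw0[OF GhEd0[OF ef], where u="[Gh f, Gh e]" and w="[]"]) simp
  have f12a: "cg (RR s r TYPE('k)) (mono [Gh f, Gh e, Ed e, Ed e, Ed f]) (mono [Gh f, V w, Ed e, Ed f])"
    by (rule cgw[OF GhEd[where r=r, OF re], where u="[Gh f]" and w="[Ed e, Ed f]"]) simp_all
  have f12b: "cg (RR s r TYPE('k)) (mono [Gh f, V w, Ed e, Ed f]) (mono [Gh f, Ed e, Ed f])"
    by (rule cgw[OF V_Ed[where s=s, OF se], where u="[Gh f]" and w="[Ed f]"]) simp_all
  have f12: "cg (RR s r TYPE('k)) (mono [Gh f, Gh e, Ed e, Ed e, Ed f]) Z"
    by (rule cg_trans[OF f12a cg_trans[OF f12b f01]])
  have f21a: "cg (RR s r TYPE('k)) (mono [Gh f, Gh e, Gh e, Ed e, Ed f]) (mono [Gh f, Gh e, V w, Ed f])"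
    by (rule cgw[OF GhEd[where r=r, OF re], where u="[Gh f, Gh e]" and w="[Ed f]"]) simp_all
  have f21b: "cg (RR s r TYPE('k)) (mono [Gh f, Gh e, V w, Ed f]) (mono [Gh f, Gh e, Ed f])"
    by (rule cgw[OF V_Ed[where s=s, OF sf], where u="[Gh f, Gh e]" and w="[]"]) simp_all
  have f21: "cg (RR s r TYPE('k)) (mono [Gh f, Gh e, Gh e, Ed e, Ed f]) Z"
    by (rule cg_trans[OF f21a cg_trans[OF f21b f10]])
  have f00: "cg (RR s r TYPE('k)) (mono [Gh f, Ed f]) (mono [V z])" using rf by (rule GhEd)
  have f11a: "cg (RR s r TYPE('k)) (mono [Gh f, Gh e, Ed e, Ed f]) (mono [Gh f, V w, Ed f])"
    by (rule cgw[OF GhEd[where r=r, OF re], where u="[Gh f]" and w="[Ed f]"]) simp_all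
  have f11b: "cg (RR s r TYPE('k)) (mono [Gh f, V w, Ed f]) (mono [Gh f, Ed f])"
    by (rule cgw[OF V_Ed[where s=s, OF sf], where u="[Gh f]" and w="[]"]) simp_all
  have f11: "cg (RR s r TYPE('k)) (mono [Gh f, Gh e, Ed e, Ed f]) (mono [V z])"
    by (rule cg_trans[OF f11a cg_trans[OF f11b f00]])
  have f22a: "cg (RR s r TYPE('k)) (mono [Gh f, Gh e, Gh e, Ed e, Ed e, Ed f]) (mono [Gh f, Gh e, V w, Ed e, Ed f])"
    by (rule cgw[OF GhEd[where r=r, OF re], where u="[Gh f, Gh e]" and w="[Ed e, Ed f]"]) simp_all
  have f22b: "cg (RR s r TYPE('k)) (mono [Gh f, Gh e, V w, Ed e, Ed f]) (mono [Gh f, Gh e, Ed e, Ed f])"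
    by (rule cgw[OF V_Ed[where s=s, OF se], where u="[Gh f, Gh e]" and w="[Ed f]"]) simp_all
  have f22: "cg (RR s r TYPE('k)) (mono [Gh f, Gh e, Gh e, Ed e, Ed e, Ed f]) (mono [V z])"
    by (rule cg_trans[OF f22a cg_trans[OF f22b f11]])
  have g0: "cg (RR s r TYPE('k)) (mono [Ed f, V z]) (mono [Ed f])" using rf by (rule Ed_V)
  have g1: "cg (RR s r TYPE('k)) (mono [Ed e, Ed f, V z]) (mono [Ed e, Ed f])"
    by (rule cgw[OF Ed_V[where r=r, OF rf], where u="[Ed e]" and w="[]"]) simp_all
  have g2: "cg (RR s r TYPE('k)) (mono [Ed e, Ed e, Ed f, V z]) (mono [Ed e, Ed e, Ed f])"
    by (rule cgw[OF Ed_V[where r=r, OF rf], where u="[Ed e, Ed e]" and w="[]"]) simp_all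
  show ?thesis
  proof (rule finish[where P=p and v=z and i=0 and k=1 and g=g and qs="(w, [e, f])"
        and h="\<lambda>q. if q = (w, [f]) then 1 else 0"])
    fix i j :: nat assume "i < 3" "j < 3" "i \<noteq> j"
    then show "cg (RR s r TYPE('k)) (mono (wstar (p i) @ p j)) Z"
      using idx3[OF \<open>i < 3\<close>] idx3[OF \<open>j < 3\<close>] \<open>i \<noteq> j\<close>
      by (elim disjE) (simp_all add: p_def wstar_def f01 f10 f02 f20 f12 f21)
  next
    fix i :: nat assume "i < 3"
    then show "cg (RR s r TYPE('k)) (mono (wstar (p i) @ p i)) (mono [V z])"
      using idx3[OF \<open>i < 3\<close>] by (elim disjE) (simp_all add: p_def wstar_def f00 f11 f22)
  next
    fix i :: nat assume "i < 3"
    then show "cg (RR s r TYPE('k)) (mono (p i @ [V z])) (mono (p i))"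
      using idx3[OF \<open>i < 3\<close>] by (elim disjE) (simp_all add: p_def wstar_def g0 g1 g2)
  next
    fix i :: nat assume "i < 3"
    then show "p i \<noteq> []" by (simp add: p_def)
  next
    show "valid s r g (w, [e, f])" using se re sf ef by (simp add: valid_def reduced_def g_def)
  next
    show "p 0 @ wstar (p 1) \<noteq> p 1 @ wstar (p 0)" using ef by (simp add: p_def wstar_def)
  next
    show "H (\<lambda>q. if q = (w, [f]) then 1 else 0) (phi s r g (p 0 @ wstar (p 1)) (w, [e, f])) -
      H (\<lambda>q. if q = (w, [f]) then 1 else 0) (phi s r g (p 1 @ wstar (p 0)) (w, [e, f])) \<noteq> (0::'k)"
    proof -
      let ?h = "\<lambda>q. if q = (w, [f]) then 1 else 0 :: 'k"
      have a: "p 0 @ wstar (p 1) = [Ed f, Gh f, Gh e]" "p 1 @ wstar (p 0) = [Ed e, Ed f, Gh f]"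
        by (simp_all add: p_def wstar_def)
      have gw: "g w = e" by (simp add: g_def)
      have "phi s r g [Ed f, Gh f, Gh e] (w, [e, f]) = Some (w, [f])"
        using re rf sf gw ef by simp
      then have 1: "H ?h (phi s r g [Ed f, Gh f, Gh e] (w, [e, f])) = 1" by simp
      have "phi s r g [Ed e, Ed f, Gh f] (w, [e, f]) = None"
        using fe by simp
      then have 2: "H ?h (phi s r g [Ed e, Ed f, Gh f] (w, [e, f])) = 0" by simp
      show ?thesis unfolding a using 1 2 by simp
    qed
  qed (use gH in auto)
qed



lemma two_cycle:
  fixes s r :: "'e \<Rightarrow> 'v"
  assumes ab: "s a \<noteq> s b" and ra: "r a = s b" and rb: "r b = s a" and sf: "s f = s a" and fa: "f \<noteq> a"
  shows "\<not> skew_lie_solvable s r TYPE('k::field)"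
proof -
  consider "r f = s a" | "r f = s b" | "r f \<noteq> s a" "r f \<noteq> s b" by blast
  then show ?thesis
  proof cases
    case 1
    show ?thesis by (rule shapeC[where e=f and f=a and w="s a" and z="r a"]) (use 1 sf fa in auto)
  next
    case 2
    show ?thesis by (rule shapeA[where e=a and f=f and v="s b"]) (use 2 sf fa ab ra in auto)
  next
    case 3
    show ?thesis by (rule shapeB[where e=b and f=f and x="s b" and y="s a" and v="r f"]) (use 3 sf ab rb in auto)
  qed
qed

lemma cycle_case:
  fixes s r :: "'e \<Rightarrow> 'v"
  assumes "has_cycle_with_exit s r"
  shows "\<not> skew_lie_solvable s r TYPE('k::field)"
proof -
  obtain p f where cyc: "is_cycle s r p" and ex: "is_exit s p f"
    using assms unfolding has_cycle_with_exit_def by blast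
  have ne: "p \<noteq> []" and pth: "\<And>i. Suc i < length p \<Longrightarrow> r (p ! i) = s (p ! Suc i)"
    and cl: "s (hd p) = r (last p)" and dist: "distinct (map s p)"
    using cyc unfolding is_cycle_def is_path_def by auto
  obtain i where i: "i < length p" "s f = s (p ! i)" "f \<noteq> p ! i" using ex unfolding is_exit_def by blast
  consider "length p = 1" | "length p = 2" | "length p \<ge> 3" using ne
    by (cases "length p") (auto, linarith)
  then show ?thesis
  proof cases
    case 1
    then obtain e where p: "p = [e]" by (cases p) auto
    then have "i = 0" using i by simp
    then show ?thesis
      by (intro shapeC[where e=e and f=f and w="s e" and z="r f"]) (use p i cl in auto)
  next
    case 2
    then obtain a b where p: "p = [a, b]"
      by (cases p; cases "tl p") auto
    have ab: "s a \<noteq> s b" using dist p by simp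
    have ra: "r a = s b" using pth[of 0] p by simp
    have rb: "r b = s a" using cl p by simp
    have "i = 0 \<or> i = 1" using i 2 by auto
    then show ?thesis
    proof
      assume "i = 0"
      then show ?thesis using two_cycle[OF ab ra rb, of f] i p by simp
    next
      assume "i = 1"
      then show ?thesis using two_cycle[OF ab[symmetric] rb ra, of f] i p by simp
    qed
  next
    case 3
    have d: "s (p ! 0) \<noteq> s (p ! 1)" "s (p ! 0) \<noteq> s (p ! 2)" "s (p ! 1) \<noteq> s (p ! 2)"
    proof -
      have D: "\<And>i j. i < length p \<Longrightarrow> j < length p \<Longrightarrow> i \<noteq> j \<Longrightarrow> s (p ! i) \<noteq> s (p ! j)"
        using dist by (auto simp: distinct_conv_nth)
      show "s (p ! 0) \<noteq> s (p ! 1)" "s (p ! 0) \<noteq> s (p ! 2)" "s (p ! 1) \<noteq> s (p ! 2)"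
      proof -
        have l: "0 < length p" "1 < length p" "2 < length p" using 3 by auto
        show "s (p ! 0) \<noteq> s (p ! 1)" by (rule D[OF l(1) l(2)]) simp
        show "s (p ! 0) \<noteq> s (p ! 2)" by (rule D[OF l(1) l(3)]) simp
        show "s (p ! 1) \<noteq> s (p ! 2)" by (rule D[OF l(2) l(3)]) simp
      qed
    qed
    show ?thesis
      by (rule shapeB[where e="p ! 0" and f="p ! 1" and x="s (p ! 0)" and y="s (p ! 1)" and v="s (p ! 2)"])
        (use d pth[of 0] pth[of 1] 3 in \<open>auto simp: numeral_2_eq_2\<close>)
  qed
qed

theorem lemma4p2:
  fixes s r :: "'e \<Rightarrow> 'v"
  assumes "has_cycle_with_exit s r \<or> contains_F1 s r \<or> contains_F2 s r \<or> contains_F3 s r"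
  shows "\<not> skew_lie_solvable s r TYPE('k::field)"
  using assms
proof (elim disjE)
  assume "has_cycle_with_exit s r" then show ?thesis by (rule cycle_case)
next
  assume "contains_F1 s r"
  then obtain x y v e f where "distinct [x, y, v]" "s e = x" "r e = y" "s f = y" "r f = v"
    unfolding contains_F1_def by blast
  then show ?thesis by (intro shapeB[where e=e and f=f and x=x and y=y and v=v]) auto
next
  assume "contains_F2 s r"
  then obtain x v z e f where "distinct [x, v, z]" "s e = x" "r e = v" "s f = z" "r f = v"
    unfolding contains_F2_def by blast
  then show ?thesis by (intro shapeA[where e=e and f=f and v=v]) auto
next
  assume "contains_F3 s r"
  then obtain x v e f where "x \<noteq> v" "e \<noteq> f" "s e = x" "r e = v" "s f = x" "r f = v"
    unfolding contains_F3_def by blast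
  then show ?thesis by (intro shapeA[where e=e and f=f and v=v]) auto
qed



end
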